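(* Let $k\ge 2$ and let $G$ be a finite simple graph admitting a closed neighborhood balanced $k$-coloring $c$ with color classes $V_1,\dots,V_k$. Then for all distinct $i,j\in\{1,\dots,k\}$, $$|E(V_i,V_j)|=\frac{2|E(G)|+|V(G)|}{k^2},$$ and for every $i\in\{1,\dots,k\}$, $$|E(V_i,V_i)|=\frac{2|E(G)|+|V(G)|}{2k^2}-\frac{|V_i|}{2}.$$
   Context: For a vertex $v$, $N[v]=\{v\}\cup\{u : uv\in E(G)\}$. A closed neighborhood balanced $k$-coloring of $G$ is a map $c: V(G)\to\{1,\dots,k\}$ such that for every vertex $v$ the numbers $|\{u\in N[v] : c(u)=i\}|$, $i=1,\dots,k$, are all equal; its color classes are $V_i=c^{-1}(i)$. For $X,Y\subseteq V(G)$, $E(X,Y)$ is the set of edges joining a vertex of $X$ to a vertex of $Y$; $E(X,X)$ is the set of edges with both endpoints in $X$. *)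

theory Defs
  imports Complex_Main
begin

definition simple_graph :: "'a set \<Rightarrow> 'a set set \<Rightarrow> bool" where
  "simple_graph V E \<longleftrightarrow> finite V \<and> (\<forall>e\<in>E. e \<subseteq> V \<and> card e = 2)"

definition closed_nbhd :: "'a set \<Rightarrow> 'a set set \<Rightarrow> 'a \<Rightarrow> 'a set" where
  "closed_nbhd V E v = {v} \<union> {u \<in> V. {u, v} \<in> E}"

definition cnb_coloring :: "'a set \<Rightarrow> 'a set set \<Rightarrow> nat \<Rightarrow> ('a \<Rightarrow> nat) \<Rightarrow> bool" where
  "cnb_coloring V E k c \<longleftrightarrow>
     (\<forall>v\<in>V. c v \<in> {1..k}) \<and>
     (\<forall>v\<in>V. \<forall>i\<in>{1..k}. \<forall>j\<in>{1..k}.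
        card {u \<in> closed_nbhd V E v. c u = i} = card {u \<in> closed_nbhd V E v. c u = j})"

definition color_class :: "'a set \<Rightarrow> ('a \<Rightarrow> nat) \<Rightarrow> nat \<Rightarrow> 'a set" where
  "color_class V c i = {v \<in> V. c v = i}"

definition edges_between :: "'a set set \<Rightarrow> 'a set \<Rightarrow> 'a set \<Rightarrow> 'a set set" where
  "edges_between E X Y = {e \<in> E. \<exists>x\<in>X. \<exists>y\<in>Y. e = {x, y}}"

end

theory Submission
  imports Defs
begin

definition pairs_in :: "'a set set \<Rightarrow> 'a set \<Rightarrow> 'a set \<Rightarrow> ('a \<times> 'a) set" where
  "pairs_in E X Y = {p \<in> X \<times> Y. {fst p, snd p} \<in> E}"

lemma pairs_sum:
  assumes "finite X" "finite Y"
  shows "real (card (pairs_in E X Y)) = (\<Sum>x\<in>X. \<Sum>y\<in>Y. of_bool ({x,y} \<in> E))"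
proof -
  have "(\<Sum>x\<in>X. \<Sum>y\<in>Y. (of_bool ({x,y} \<in> E)::real)) = (\<Sum>p\<in>X \<times> Y. of_bool ({fst p, snd p} \<in> E))"
    by (simp add: sum.cartesian_product split_def)
  also have "\<dots> = real (card ((X \<times> Y) \<inter> {p. {fst p, snd p} \<in> E}))"
    using assms by (simp only: sum_of_bool_eq finite_cartesian_product)
  also have "(X \<times> Y) \<inter> {p. {fst p, snd p} \<in> E} = pairs_in E X Y"
    unfolding pairs_in_def by auto
  finally show ?thesis by simp
qed

lemma pairs_disj:
  assumes "X \<inter> Y = {}"
  shows "card (edges_between E X Y) = card (pairs_in E X Y)"
proof -
  have img: "edges_between E X Y = (\<lambda>p. {fst p, snd p}) ` pairs_in E X Y"
  proof
    show "edges_between E X Y \<subseteq> (\<lambda>p. {fst p, snd p}) ` pairs_in E X Y"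
    proof
      fix e assume "e \<in> edges_between E X Y"
      then obtain x y where "x \<in> X" "y \<in> Y" "e = {x,y}" "e \<in> E"
        unfolding edges_between_def by blast
      then show "e \<in> (\<lambda>p. {fst p, snd p}) ` pairs_in E X Y"
        unfolding pairs_in_def by (intro rev_image_eqI[of "(x,y)"]) auto
    qed
  qed (auto simp: edges_between_def pairs_in_def, blast)
  have "inj_on (\<lambda>p. {fst p, snd p}) (pairs_in E X Y)"
    unfolding inj_on_def pairs_in_def using assms by (auto simp: doubleton_eq_iff)
  then show ?thesis using img card_image by metis
qed

lemma pairs_same:
  assumes "finite E" "\<forall>e\<in>E. card e = 2" "finite X"
  shows "card (pairs_in E X X) = 2 * card (edges_between E X X)"
proof -
  let ?f = "\<lambda>p. {fst p, snd p}"
  let ?P = "pairs_in E X X"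
  let ?B = "edges_between E X X"
  have fB: "finite ?B" using assms(1) unfolding edges_between_def by simp
  have fP: "finite ?P"
    using assms(3) unfolding pairs_in_def by simp
  have sub: "?f ` ?P \<subseteq> ?B" unfolding edges_between_def pairs_in_def by force
  have fib: "card {p \<in> ?P. ?f p = e} = 2" if e: "e \<in> ?B" for e
  proof -
    obtain x y where xy: "x \<in> X" "y \<in> X" "e = {x,y}" "e \<in> E"
      using e unfolding edges_between_def by blast
    have "x \<noteq> y" using xy assms(2) by fastforce
    have "{p \<in> ?P. ?f p = e} = {(x,y),(y,x)}"
      using xy unfolding pairs_in_def by (auto simp: doubleton_eq_iff insert_commute)
    then show ?thesis using \<open>x \<noteq> y\<close> by simp
  qed
  have "card ?P = (\<Sum>p\<in>?P. 1)" by simp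
  also have "\<dots> = (\<Sum>e\<in>?B. \<Sum>p\<in>{p \<in> ?P. ?f p = e}. 1)"
    using sum.group[OF fP fB sub, of "\<lambda>_. 1::nat"] by simp
  also have "\<dots> = (\<Sum>e\<in>?B. 2)" using fib by (intro sum.cong) auto
  finally show ?thesis by simp
qed

theorem theorem2p8:
  fixes V :: "'a set" and E :: "'a set set" and k :: nat and c :: "'a \<Rightarrow> nat"
  assumes "k \<ge> 2"
    and "simple_graph V E"
    and "cnb_coloring V E k c"
  shows "(\<forall>i\<in>{1..k}. \<forall>j\<in>{1..k}. i \<noteq> j \<longrightarrow>
            real (card (edges_between E (color_class V c i) (color_class V c j)))
              = (2 * real (card E) + real (card V)) / real k ^ 2)
       \<and> (\<forall>i\<in>{1..k}.
            real (card (edges_between E (color_class V c i) (color_class V c i)))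
              = (2 * real (card E) + real (card V)) / (2 * real k ^ 2)
                - real (card (color_class V c i)) / 2)"
proof -
  have fV: "finite V" and Esub: "\<forall>e\<in>E. e \<subseteq> V \<and> card e = 2"
    using assms(2) unfolding simple_graph_def by auto
  have fE: "finite E"
  proof -
    have "E \<subseteq> Pow V" using Esub by auto
    then show ?thesis using fV by (meson finite_Pow_iff finite_subset)
  qed
  have E2: "\<forall>e\<in>E. card e = 2" using Esub by auto
  have noloop: "{v, v} \<notin> E" for v using E2 by fastforce
  define C where "C i = color_class V c i" for i
  have CV: "C i \<subseteq> V" for i unfolding C_def color_class_def by auto
  have fC: "finite (C i)" for i using CV fV finite_subset by metis
  have col: "\<forall>v\<in>V. c v \<in> {1..k}"
    using assms(3) unfolding cnb_coloring_def by blast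
  have bal: "\<forall>v\<in>V. \<forall>i\<in>{1..k}. \<forall>j\<in>{1..k}.
        card {u \<in> closed_nbhd V E v. c u = i} = card {u \<in> closed_nbhd V E v. c u = j}"
    using assms(3) unfolding cnb_coloring_def by blast
  define b :: "'a \<Rightarrow> 'a \<Rightarrow> real" where "b x y = of_bool ({x,y} \<in> E) + of_bool (x = y)" for x y
  have bsym: "b x y = b y x" for x y
  proof -
    have "{x,y} = {y,x}" by (rule insert_commute)
    then show ?thesis unfolding b_def by (simp only: eq_commute[of x y])
  qed
  define S where "S i j = (\<Sum>x\<in>C i. \<Sum>y\<in>C j. b x y)" for i j
  have row: "(\<Sum>y\<in>C i. b v y) = real (card {u \<in> closed_nbhd V E v. c u = i})" if "v \<in> V" for v i
  proof -
    have "(\<Sum>y\<in>C i. b v y) = (\<Sum>y\<in>C i. of_bool ({v,y} \<in> E \<or> v = y))"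
      unfolding b_def using noloop by (intro sum.cong) auto
    also have "\<dots> = real (card (C i \<inter> {y. {v,y} \<in> E \<or> v = y}))"
      by (rule sum_of_bool_eq[OF fC fC])
    also have "C i \<inter> {y. {v,y} \<in> E \<or> v = y} = {u \<in> closed_nbhd V E v. c u = i}"
    proof -
      have sw: "({y,v} \<in> E) = ({v,y} \<in> E)" for y by (simp add: insert_commute)
      show ?thesis
        using that unfolding C_def color_class_def closed_nbhd_def by (auto simp: sw)
    qed
    finally show ?thesis .
  qed
  have rowbal: "(\<Sum>y\<in>C i. b v y) = (\<Sum>y\<in>C j. b v y)" if "v \<in> V" "i \<in> {1..k}" "j \<in> {1..k}" for v i j
  proof -
    have "card {u \<in> closed_nbhd V E v. c u = i} = card {u \<in> closed_nbhd V E v. c u = j}"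
      using bal that by blast
    then show ?thesis using row[OF that(1), of i] row[OF that(1), of j] by simp
  qed
  have Sj: "S i j = S i j'" if "j \<in> {1..k}" "j' \<in> {1..k}" for i j j'
    unfolding S_def
  proof (rule sum.cong[OF refl])
    fix x assume "x \<in> C i"
    then have "x \<in> V" using CV by blast
    then show "(\<Sum>y\<in>C j. b x y) = (\<Sum>y\<in>C j'. b x y)" using rowbal that by blast
  qed
  have Ssym: "S i j = S j i" for i j
    unfolding S_def by (subst sum.swap) (simp add: bsym)
  have one: "1 \<in> {1..k}" using assms(1) by simp
  have Sc: "S i j = S 1 1" if "i \<in> {1..k}" "j \<in> {1..k}" for i j
    using Sj[OF that(2) one, of i] Ssym[of i 1] Sj[OF that(1) one, of 1] by simp
  have grp: "(\<Sum>x\<in>V. f x) = (\<Sum>i\<in>{1..k}. \<Sum>x\<in>C i. f x)" for f :: "'a \<Rightarrow> real"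
  proof -
    have "c ` V \<subseteq> {1..k}" using col by auto
    from sum.group[OF fV _ this, of f] show ?thesis
      unfolding C_def color_class_def by simp
  qed
  have tot1: "(\<Sum>x\<in>V. \<Sum>y\<in>V. b x y) = (\<Sum>i\<in>{1..k}. \<Sum>j\<in>{1..k}. S i j)"
    unfolding S_def grp by (rule sum.cong[OF refl], rule sum.swap)
  have "edges_between E V V = E"
  proof
    show "E \<subseteq> edges_between E V V"
    proof
      fix e assume "e \<in> E"
      with Esub obtain x y where "e = {x,y}" "e \<subseteq> V" by (metis card_2_iff)
      then show "e \<in> edges_between E V V" using \<open>e \<in> E\<close> unfolding edges_between_def by auto
    qed
  qed (auto simp: edges_between_def)
  then have pV: "card (pairs_in E V V) = 2 * card E"
    using pairs_same[OF fE E2 fV] by simp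
  have tot2: "(\<Sum>x\<in>V. \<Sum>y\<in>V. b x y) = 2 * real (card E) + real (card V)"
  proof -
    have "(\<Sum>x\<in>V. \<Sum>y\<in>V. b x y) = (\<Sum>x\<in>V. \<Sum>y\<in>V. (of_bool ({x,y} \<in> E)::real)) + (\<Sum>x\<in>V. \<Sum>y\<in>V. (of_bool (x = y)::real))"
      unfolding b_def by (simp add: sum.distrib)
    also have "(\<Sum>x\<in>V. \<Sum>y\<in>V. (of_bool (x = y)::real)) = real (card V)"
      using fV by simp
    also have "(\<Sum>x\<in>V. \<Sum>y\<in>V. (of_bool ({x,y} \<in> E)::real)) = 2 * real (card E)"
      using pairs_sum[OF fV fV, of E] pV by simp
    finally show ?thesis .
  qed
  have "(\<Sum>i\<in>{1..k}. \<Sum>j\<in>{1..k}. S i j) = real k ^ 2 * S 1 1"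
  proof -
    have "(\<Sum>i\<in>{1..k}. \<Sum>j\<in>{1..k}. S i j) = (\<Sum>i\<in>{1..k}. \<Sum>j\<in>{1..k}. S 1 1)"
      by (intro sum.cong refl) (rule Sc; assumption)
    then show ?thesis by (simp add: power2_eq_square)
  qed
  then have S11: "S 1 1 = (2 * real (card E) + real (card V)) / real k ^ 2"
    using tot1 tot2 assms(1) by (simp add: field_simps)
  show ?thesis
  proof (intro conjI ballI impI)
    fix i j assume ij: "i \<in> {1..k}" "j \<in> {1..k}" "i \<noteq> j"
    have dis: "C i \<inter> C j = {}" using ij unfolding C_def color_class_def by auto
    have "S i j = (\<Sum>x\<in>C i. \<Sum>y\<in>C j. (of_bool ({x,y} \<in> E)::real))"
      unfolding S_def b_def using dis by (intro sum.cong) auto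
    also have "\<dots> = real (card (edges_between E (C i) (C j)))"
      using pairs_sum[OF fC fC] pairs_disj[OF dis] by simp
    finally show "real (card (edges_between E (color_class V c i) (color_class V c j)))
              = (2 * real (card E) + real (card V)) / real k ^ 2"
      using Sc[OF ij(1,2)] S11 unfolding C_def by simp
  next
    fix i assume i: "i \<in> {1..k}"
    have "S i i = (\<Sum>x\<in>C i. \<Sum>y\<in>C i. (of_bool ({x,y} \<in> E)::real)) + (\<Sum>x\<in>C i. \<Sum>y\<in>C i. (of_bool (x = y)::real))"
      unfolding S_def b_def by (simp add: sum.distrib)
    also have "(\<Sum>x\<in>C i. \<Sum>y\<in>C i. (of_bool (x = y)::real)) = real (card (C i))"
      using fC by simp
    also have "(\<Sum>x\<in>C i. \<Sum>y\<in>C i. (of_bool ({x,y} \<in> E)::real)) = 2 * real (card (edges_between E (C i) (C i)))"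
      using pairs_sum[OF fC[of i] fC[of i], of E] pairs_same[OF fE E2 fC[of i]] by simp
    finally show "real (card (edges_between E (color_class V c i) (color_class V c i)))
              = (2 * real (card E) + real (card V)) / (2 * real k ^ 2)
                - real (card (color_class V c i)) / 2"
      using Sc[OF i i] S11 assms(1) unfolding C_def by (simp add: field_simps)
  qed
qed

end
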